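(* Let $\mathcal{F}$ be a linear invariant family of holomorphic mappings in $\mathbb{D}$ of order $\beta<\infty$. Then for every univalent mapping $\varphi\in\mathcal{F}$, $$(1-|z|^2)\left|\frac{z\varphi'(z)}{\varphi(z)}\right|\leq 2\beta\quad\text{for all } z\in\mathbb{D}.$$
   Context: A family $\mathcal{F}$ of locally univalent analytic functions $f(z)=z+a_2z^2+\cdots$ in $\mathbb{D}$ is a linear invariant family if for every $f\in\mathcal{F}$ and every $a\in\mathbb{D}$, the function $\frac{f(\varphi_a(z))-f(a)}{(1-|a|^2)f'(a)}$ belongs to $\mathcal{F}$, where $\varphi_a(z)=\frac{z+a}{1+\overline{a}z}$. Its order is $\beta=\sup_{f\in\mathcal{F}}|a_2(f)|$. *)

theory Defs
  imports "HOL-Complex_Analysis.Complex_Analysis"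
begin

abbreviation unit_disk :: "complex set" where
  "unit_disk \<equiv> ball 0 1"

definition normalized_lu :: "(complex \<Rightarrow> complex) \<Rightarrow> bool" where
  "normalized_lu f \<longleftrightarrow> f holomorphic_on unit_disk \<and> f 0 = 0 \<and> deriv f 0 = 1
     \<and> (\<forall>z\<in>unit_disk. deriv f z \<noteq> 0)"

definition disk_aut :: "complex \<Rightarrow> complex \<Rightarrow> complex" where
  "disk_aut a z = (z + a) / (1 + cnj a * z)"

definition koebe_transform :: "(complex \<Rightarrow> complex) \<Rightarrow> complex \<Rightarrow> complex \<Rightarrow> complex" where
  "koebe_transform f a = (\<lambda>z. (f (disk_aut a z) - f a) /
       (complex_of_real (1 - (cmod a)\<^sup>2) * deriv f a))"

definition linear_invariant_family :: "(complex \<Rightarrow> complex) set \<Rightarrow> bool" where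
  "linear_invariant_family F \<longleftrightarrow> (\<forall>f\<in>F. normalized_lu f) \<and>
     (\<forall>f\<in>F. \<forall>a\<in>unit_disk. koebe_transform f a \<in> F)"

definition coeff2 :: "(complex \<Rightarrow> complex) \<Rightarrow> complex" where
  "coeff2 f = deriv (deriv f) 0 / 2"

text \<open>Order of the family (meaningful when finite, i.e. bounded above).\<close>
definition lif_order :: "(complex \<Rightarrow> complex) set \<Rightarrow> real" where
  "lif_order F = (SUP f\<in>F. cmod (coeff2 f))"

end

theory Submission
  imports Defs
begin


lemma disk_identity:
  "(cmod (1 + cnj a * z))^2 - (cmod (z+a))^2 = (1 - (cmod a)^2)*(1-(cmod z)^2)"
  unfolding cmod_power2 by (simp add: algebra_simps power2_eq_square)

lemma disk_aut_den_nz: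
  assumes "a \<in> unit_disk" "z \<in> unit_disk" shows "1 + cnj a * z \<noteq> 0"
proof
  assume "1 + cnj a * z = 0"
  hence "cnj a * z = -1" by (simp add: add_eq_0_iff)
  hence "cmod a * cmod z = 1" by (metis complex_mod_cnj norm_minus_cancel norm_mult norm_one)
  moreover have "cmod a * cmod z < 1" using assms
    by (simp add: mult_strict_mono' order_less_imp_le) (smt (verit) mult_left_le_one_le norm_ge_zero)
  ultimately show False by simp
qed

lemma disk_aut_in:
  assumes "a \<in> unit_disk" "z \<in> unit_disk" shows "disk_aut a z \<in> unit_disk"
proof -
  have a: "cmod a < 1" and z: "cmod z < 1" using assms by auto
  have "(1 - (cmod a)^2)*(1-(cmod z)^2) > 0"
    using a z by (simp add: abs_square_less_1)
  hence "(cmod (z+a))^2 < (cmod (1 + cnj a * z))^2" using disk_identity[of a z] by linarith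
  hence "cmod (z+a) < cmod (1 + cnj a * z)"
    using power2_less_imp_less by fastforce
  thus ?thesis using disk_aut_den_nz[OF assms]
    by (simp add: disk_aut_def norm_divide divide_less_eq)
qed

lemma disk_aut_inj:
  assumes "a \<in> unit_disk" shows "inj_on (disk_aut a) unit_disk"
proof (rule inj_onI)
  fix x y assume x: "x \<in> unit_disk" and y: "y \<in> unit_disk" and e: "disk_aut a x = disk_aut a y"
  have nx: "1 + cnj a * x \<noteq> 0" and ny: "1 + cnj a * y \<noteq> 0"
    using disk_aut_den_nz assms x y by auto
  from e have "(x + a) * (1 + cnj a * y) = (y + a) * (1 + cnj a * x)"
    using nx ny by (simp add: disk_aut_def field_simps)
  hence "(x - y) * (1 - cnj a * a) = 0" by (simp add: algebra_simps)
  moreover have "cnj a * a \<noteq> 1"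
  proof
    assume "cnj a * a = 1"
    hence "cmod a ^ 2 = 1" by (metis complex_norm_square mult.commute of_real_eq_1_iff of_real_power)
    thus False using assms by (simp add: power2_eq_square) (smt (verit) mult_left_le_one_le norm_ge_zero)
  qed
  ultimately show "x = y" by simp
qed

lemma disk_aut_deriv:
  assumes "1 + cnj a * z \<noteq> 0"
  shows "(disk_aut a has_field_derivative (1 - cnj a * a) / (1 + cnj a * z)^2) (at z)"
  unfolding disk_aut_def[abs_def]
  by (rule derivative_eq_intros | use assms in \<open>simp add: field_simps power2_eq_square\<close>)+




lemma cnj_mult_self: "cnj a * a = of_real ((cmod a)^2)"
  by (metis complex_norm_square mult.commute of_real_power)

lemma nlu_deriv:
  assumes "normalized_lu f" "w \<in> unit_disk"
  shows "(f has_field_derivative deriv f w) (at w)"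
    "(deriv f has_field_derivative deriv (deriv f) w) (at w)"
proof -
  have hf: "f holomorphic_on unit_disk" using assms by (simp add: normalized_lu_def)
  show "(f has_field_derivative deriv f w) (at w)"
    using holomorphic_derivI[OF hf open_ball assms(2)] .
  have "deriv f holomorphic_on unit_disk" using hf by (simp add: holomorphic_deriv)
  then show "(deriv f has_field_derivative deriv (deriv f) w) (at w)"
    using holomorphic_derivI[OF _ open_ball assms(2)] by blast
qed

lemma coeff2_koebe:
  assumes nf: "normalized_lu f" and a: "a \<in> unit_disk"
  shows "coeff2 (koebe_transform f a) =
     (of_real (1 - (cmod a)^2) * deriv (deriv f) a / deriv f a - 2 * cnj a) / 2"
proof -
  define c where "c = complex_of_real (1 - (cmod a)\<^sup>2) * deriv f a"
  define T where "T = disk_aut a"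
  define T1 where "T1 = (\<lambda>z. (1 - cnj a * a) / (1 + cnj a * z)^2)"
  define K1 where "K1 = (\<lambda>z. deriv f (T z) * T1 z / c)"
  have am: "cmod a < 1" using a by simp
  have fa: "deriv f a \<noteq> 0" using nf a by (simp add: normalized_lu_def)
  have r: "1 - (cmod a)^2 \<noteq> 0" using am
  proof -
    have "(cmod a)^2 < 1" using am by (simp add: abs_square_less_1)
    thus ?thesis by linarith
  qed
  have rc: "complex_of_real (1 - (cmod a)^2) \<noteq> 0" using r of_real_eq_0_iff by blast
  have cnz: "c \<noteq> 0" unfolding c_def using fa rc by (simp only: mult_eq_0_iff) simp
  have T0: "T 0 = a" by (simp add: T_def disk_aut_def)
  have kd: "(koebe_transform f a has_field_derivative K1 z) (at z)" if z: "z \<in> unit_disk" for z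
  proof -
    have den: "1 + cnj a * z \<noteq> 0" using disk_aut_den_nz[OF a z] .
    have Tz: "T z \<in> unit_disk" using disk_aut_in[OF a z] by (simp add: T_def)
    have dT: "(T has_field_derivative T1 z) (at z)"
      using disk_aut_deriv[OF den] by (simp add: T_def T1_def)
    have "((\<lambda>z. f (T z)) has_field_derivative deriv f (T z) * T1 z) (at z)"
      using DERIV_chain2[OF nlu_deriv(1)[OF nf Tz] dT] .
    hence "((\<lambda>z. (f (T z) - f a) / c) has_field_derivative (deriv f (T z) * T1 z - 0) / c) (at z)"
      by (intro DERIV_cdivide DERIV_diff DERIV_const)
    thus ?thesis unfolding koebe_transform_def K1_def c_def T_def by simp
  qed
  have ev: "eventually (\<lambda>z. deriv (koebe_transform f a) z = K1 z) (nhds 0)"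
  proof -
    have "eventually (\<lambda>z. z \<in> unit_disk) (nhds 0)"
      by (rule eventually_nhds_in_open) auto
    thus ?thesis by eventually_elim (use kd DERIV_imp_deriv in blast)
  qed
  have dd: "deriv (deriv (koebe_transform f a)) 0 = deriv K1 0"
    by (rule deriv_cong_ev[OF ev refl])
  have d0: "1 + cnj a * 0 \<noteq> 0" by simp
  have dT0: "(T has_field_derivative T1 0) (at 0)"
    using disk_aut_deriv[OF d0] by (simp add: T_def T1_def)
  have dT1: "(T1 has_field_derivative (-2 * cnj a * (1 - cnj a * a))) (at 0)"
    unfolding T1_def by (auto intro!: derivative_eq_intros)
  have dfT: "((\<lambda>z. deriv f (T z)) has_field_derivative deriv (deriv f) a * T1 0) (at 0)"
    using DERIV_chain2[OF nlu_deriv(2)[OF nf, of "T 0"] dT0] a T0 by simp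
  have "(K1 has_field_derivative (deriv (deriv f) a * T1 0 * T1 0 + (-2 * cnj a * (1 - cnj a * a)) * deriv f (T 0)) / c) (at 0)"
    unfolding K1_def by (rule DERIV_cdivide[OF DERIV_mult[OF dfT dT1]])
  hence "deriv K1 0 = (deriv (deriv f) a * T1 0 * T1 0 + (-2 * cnj a * (1 - cnj a * a)) * deriv f (T 0)) / c"
    by (rule DERIV_imp_deriv)
  also have "\<dots> = of_real (1 - (cmod a)^2) * deriv (deriv f) a / deriv f a - 2 * cnj a"
  proof -
    define R where "R = complex_of_real (1 - (cmod a)^2)"
    have R0: "R \<noteq> 0" using rc by (simp add: R_def)
    have t: "T1 0 = R" unfolding T1_def R_def cnj_mult_self by simp
    have t2: "1 - cnj a * a = R" unfolding R_def cnj_mult_self by simp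
    have cc: "c = R * deriv f a" by (simp add: c_def R_def)
    have gen: "\<And>D1 D2 R ca::complex. D1 \<noteq> 0 \<Longrightarrow> R \<noteq> 0 \<Longrightarrow>
       (D2 * R * R + (-2 * ca * R) * D1) / (R * D1) = R * D2 / D1 - 2 * ca"
      by (simp add: field_simps)
    show ?thesis unfolding t t2 cc T0 R_def[symmetric] using gen[OF fa R0] by simp
  qed
  finally show ?thesis using dd by (simp add: coeff2_def)
qed




lemma lif_coeff2_le:
  assumes "bdd_above ((\<lambda>f. cmod (coeff2 f)) ` F)" "f \<in> F"
  shows "cmod (coeff2 f) \<le> lif_order F"
  unfolding lif_order_def using assms by (rule cSUP_upper2) simp

lemma lif_order_nonneg:
  assumes "bdd_above ((\<lambda>f. cmod (coeff2 f)) ` F)" "f \<in> F"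
  shows "0 \<le> lif_order F"
  using lif_coeff2_le[OF assms] norm_ge_zero order_trans by blast

lemma lif_a2_bound:
  assumes L: "linear_invariant_family F" and B: "bdd_above ((\<lambda>f. cmod (coeff2 f)) ` F)"
    and f: "f \<in> F" and a: "a \<in> unit_disk"
  shows "cmod (of_real (1 - (cmod a)^2) * deriv (deriv f) a / deriv f a - 2 * cnj a) \<le> 2 * lif_order F"
proof -
  have nf: "normalized_lu f" using L f by (simp add: linear_invariant_family_def)
  have kF: "koebe_transform f a \<in> F" using L f a by (simp add: linear_invariant_family_def)
  have "cmod (coeff2 (koebe_transform f a)) \<le> lif_order F" by (rule lif_coeff2_le[OF B kF])
  thus ?thesis unfolding coeff2_koebe[OF nf a] by (simp add: norm_divide)
qed

lemma lif_order_ge1: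
  assumes L: "linear_invariant_family F" and B: "bdd_above ((\<lambda>f. cmod (coeff2 f)) ` F)"
    and f: "f \<in> F"
  shows "1 \<le> lif_order F"
proof -
  define \<beta> where "\<beta> = lif_order F"
  have nf: "normalized_lu f" using L f by (simp add: linear_invariant_family_def)
  have hf: "f holomorphic_on unit_disk" using nf by (simp add: normalized_lu_def)
  have nz: "\<And>z. z \<in> unit_disk \<Longrightarrow> deriv f z \<noteq> 0" using nf by (simp add: normalized_lu_def)
  have b0: "0 \<le> \<beta>" unfolding \<beta>_def by (rule lif_order_nonneg[OF B f])
  have key: "r \<le> \<beta>" if r0: "0 < r" and r1: "r < 1" for r
  proof -
    define h where "h = (\<lambda>z. deriv (deriv f) z / deriv f z)"
    have d1: "deriv f holomorphic_on unit_disk" using hf by (simp add: holomorphic_deriv)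
    have d2: "deriv (deriv f) holomorphic_on unit_disk" using d1 by (simp add: holomorphic_deriv)
    have hh: "h holomorphic_on unit_disk" unfolding h_def
      by (rule holomorphic_on_divide[OF d2 d1]) (use nz in auto)
    have sub: "path_image (circlepath 0 r) \<subseteq> unit_disk"
      using r0 r1 by (auto simp: path_image_circlepath_nonneg)
    have i1: "(h has_contour_integral 0) (circlepath 0 r)"
      by (rule Cauchy_theorem_disc_simple[OF hh]) (use sub in auto)
    have i2: "((\<lambda>u. 1 / (u - 0)) has_contour_integral (2 * of_real pi * \<i> * 1)) (circlepath 0 r)"
      using Cauchy_integral_circlepath_simple[of "\<lambda>_. 1" 0 r 0] r0 by simp
    define c1 where "c1 = complex_of_real (1 - r^2)"
    define c2 where "c2 = complex_of_real (2 * r^2)"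
    have i3: "((\<lambda>u. (c1 * h u - c2 * (1 / (u - 0))) / 2) has_contour_integral
               (c1 * 0 - c2 * (2 * of_real pi * \<i> * 1)) / 2) (circlepath 0 r)"
      by (intro has_contour_integral_div has_contour_integral_diff has_contour_integral_lmul i1 i2)
    have bnd: "norm ((c1 * h x - c2 * (1 / (x - 0))) / 2) \<le> \<beta>" if x: "norm (x - 0) = r" for x
    proof -
      have xD: "x \<in> unit_disk" using x r1 by simp
      have x0: "x \<noteq> 0" using x r0 by auto
      have "cnj x * x = of_real (r^2)" using x by (simp add: cnj_mult_self)
      hence cx: "cnj x = of_real (r^2) / x" using x0 by (simp add: field_simps)
      have e: "(c1 * h x - c2 * (1 / (x - 0))) / 2 =
            (of_real (1 - (cmod x)^2) * deriv (deriv f) x / deriv f x - 2 * cnj x) / 2"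
        using x unfolding cx c1_def c2_def h_def by simp
      have "cmod (of_real (1 - (cmod x)^2) * deriv (deriv f) x / deriv f x - 2 * cnj x) \<le> 2 * \<beta>"
        unfolding \<beta>_def by (rule lif_a2_bound[OF L B f xD])
      thus ?thesis unfolding e by (simp add: norm_divide)
    qed
    have "norm ((c1 * 0 - c2 * (2 * of_real pi * \<i> * 1)) / 2) \<le> \<beta> * (2 * pi * r)"
      by (rule has_contour_integral_bound_circlepath[OF i3 b0 r0 bnd])
    moreover have "norm ((c1 * 0 - c2 * (2 * of_real pi * \<i> * 1)) / 2) = 2 * pi * r^2"
      unfolding c2_def by (simp add: norm_mult norm_divide norm_power)
    ultimately have "2 * pi * r * r \<le> 2 * pi * r * \<beta>" by (simp add: power2_eq_square mult_ac)
    thus "r \<le> \<beta>" using r0 pi_gt_zero by simp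
  qed
  show ?thesis
  proof (rule ccontr)
    assume "\<not> 1 \<le> lif_order F"
    hence "\<beta> < 1" by (simp add: \<beta>_def)
    hence "(1 + \<beta>)/2 \<le> \<beta>" using key[of "(1+\<beta>)/2"] b0 by simp
    thus False using \<open>\<beta> < 1\<close> by simp
  qed
qed




definition lamf :: "real \<Rightarrow> real \<Rightarrow> real" where
  "lamf b t = (b - 1) * ln (1 - t) - (b + 1) * ln (1 + t)"

lemma lamf_deriv:
  assumes "\<bar>t\<bar> < 1"
  shows "(lamf b has_real_derivative ((b - 1) * (- 1 / (1 - t)) - (b + 1) * (1 / (1 + t)))) (at t)"
proof -
  have p: "1 - t > 0" "1 + t > 0" using assms by auto
  have d1: "((\<lambda>t. ln (1 - t)) has_real_derivative (- 1 / (1 - t))) (at t)"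
    using p by (auto intro!: derivative_eq_intros)
  have d2: "((\<lambda>t. ln (1 + t)) has_real_derivative (1 / (1 + t))) (at t)"
    using p by (auto intro!: derivative_eq_intros)
  show ?thesis unfolding lamf_def[abs_def]
    by (intro DERIV_diff DERIV_cmult d1 d2)
qed

lemma log_deriv_exists:
  assumes nf: "normalized_lu f"
  obtains g where "g holomorphic_on unit_disk"
    "\<And>x. x \<in> unit_disk \<Longrightarrow> exp (g x) = deriv f x"
    "\<And>x. x \<in> unit_disk \<Longrightarrow> deriv g x = deriv (deriv f) x / deriv f x"
    "\<And>x. x \<in> unit_disk \<Longrightarrow> cmod (deriv f x) = exp (Re (g x))"
    "Re (g 0) = 0"
proof -
  have hf: "f holomorphic_on unit_disk" using nf by (simp add: normalized_lu_def)
  have nz: "\<And>z. z \<in> unit_disk \<Longrightarrow> deriv f z \<noteq> 0" using nf by (simp add: normalized_lu_def)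
  have d1: "deriv f holomorphic_on unit_disk" using hf by (simp add: holomorphic_deriv)
  obtain g where hg: "g holomorphic_on unit_disk" and eg: "\<And>x. x \<in> unit_disk \<Longrightarrow> exp (g x) = deriv f x"
    using holomorphic_logarithm_exists[OF convex_ball open_ball d1 nz, of 0] by auto
  have gd: "deriv g x = deriv (deriv f) x / deriv f x" if x: "x \<in> unit_disk" for x
  proof -
    have dg: "(g has_field_derivative deriv g x) (at x)"
      using holomorphic_derivI[OF hg open_ball x] .
    have "((\<lambda>x. exp (g x)) has_field_derivative exp (g x) * deriv g x) (at x)"
      using DERIV_chain2[OF DERIV_exp dg] .
    hence "(deriv f has_field_derivative exp (g x) * deriv g x) (at x)"
      by (rule has_field_derivative_transform_within_open[OF _ open_ball x]) (use eg in auto)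
    hence "exp (g x) * deriv g x = deriv (deriv f) x"
      using DERIV_unique nlu_deriv(2)[OF nf x] by blast
    thus ?thesis using eg[OF x] nz[OF x] by (simp add: field_simps)
  qed
  have nm: "cmod (deriv f x) = exp (Re (g x))" if x: "x \<in> unit_disk" for x
    using eg[OF x] by (metis norm_exp_eq_Re)
  have "exp (Re (g 0)) = 1" using nm[of 0] nf by (simp add: normalized_lu_def)
  hence "Re (g 0) = 0" by simp
  thus ?thesis using that hg eg gd nm by blast
qed

lemma deriv_lower:
  assumes L: "linear_invariant_family F" and B: "bdd_above ((\<lambda>f. cmod (coeff2 f)) ` F)"
    and f: "f \<in> F" and z: "z \<in> unit_disk"
  shows "exp (lamf (lif_order F) (cmod z)) \<le> cmod (deriv f z)"
proof -
  define \<beta> where "\<beta> = lif_order F"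
  have nf: "normalized_lu f" using L f by (simp add: linear_invariant_family_def)
  obtain g where hg: "g holomorphic_on unit_disk"
    and gd: "\<And>x. x \<in> unit_disk \<Longrightarrow> deriv g x = deriv (deriv f) x / deriv f x"
    and nm: "\<And>x. x \<in> unit_disk \<Longrightarrow> cmod (deriv f x) = exp (Re (g x))"
    and g0: "Re (g 0) = 0"
    using log_deriv_exists[OF nf] by metis
  show ?thesis
  proof (cases "z = 0")
    case True
    then show ?thesis using nf by (simp add: lamf_def normalized_lu_def)
  next
    case False
    define \<rho> where "\<rho> = cmod z"
    define e where "e = z / of_real \<rho>"
    have \<rho>0: "0 < \<rho>" using False by (simp add: \<rho>_def)
    have \<rho>1: "\<rho> < 1" using z by (simp add: \<rho>_def)
    have e1: "cmod e = 1" using \<rho>0 by (simp add: e_def norm_divide \<rho>_def)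
    have ze: "z = of_real \<rho> * e" using \<rho>0 by (simp add: e_def)
    have ee: "e * cnj e = 1" using e1 by (metis complex_norm_square mult.commute cnj_mult_self of_real_1 power_one)
    have inD: "of_real t * e \<in> unit_disk" if "\<bar>t\<bar> < 1" for t
      using that e1 by (simp add: norm_mult)
    define q where "q = (\<lambda>t. Re (g (of_real t * e)) - lamf \<beta> t)"
    define qd where "qd = (\<lambda>t. Re (deriv g (of_real t * e) * e) - ((\<beta> - 1) * (- 1 / (1 - t)) - (\<beta> + 1) * (1 / (1 + t))))"
    have dq: "(q has_real_derivative qd t) (at t)" if t: "\<bar>t\<bar> < 1" for t
    proof -
      have lin: "((\<lambda>w. w * e) has_field_derivative e) (at (of_real t))"
        by (auto intro!: derivative_eq_intros)
      have dG: "((\<lambda>w. g (w * e)) has_field_derivative deriv g (of_real t * e) * e) (at (of_real t))"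
        using DERIV_chain2[OF holomorphic_derivI[OF hg open_ball inD[OF t]] lin] by simp
      have "((\<lambda>x. g (of_real x * e)) has_vector_derivative deriv g (of_real t * e) * e) (at t)"
        using has_vector_derivative_real_field[OF dG] by simp
      hence "((\<lambda>x. Re (g (of_real x * e))) has_real_derivative Re (deriv g (of_real t * e) * e)) (at t)"
        by (rule has_field_derivative_Re)
      thus ?thesis unfolding q_def qd_def by (intro DERIV_diff lamf_deriv t)
    qed
    have qd_nonneg: "0 \<le> qd t" if t0: "0 < t" and t1: "t < 1" for t
    proof -
      define a where "a = of_real t * e"
      have aD: "a \<in> unit_disk" using inD t0 t1 by (simp add: a_def)
      have ma: "cmod a = t" using e1 t0 by (simp add: a_def norm_mult)
      define w where "w = deriv g a"
      have bnd: "cmod (of_real (1 - t^2) * w - 2 * cnj a) \<le> 2 * \<beta>"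
        using lif_a2_bound[OF L B f aD] gd[OF aD] ma by (simp add: w_def \<beta>_def)
      have "Re (e * (of_real (1 - t^2) * w - 2 * cnj a)) \<ge> - cmod (e * (of_real (1 - t^2) * w - 2 * cnj a))"
        using abs_Re_le_cmod[of "e * (of_real (1 - t^2) * w - 2 * cnj a)"] by linarith
      moreover have "cmod (e * (of_real (1 - t^2) * w - 2 * cnj a)) \<le> 2 * \<beta>"
        using bnd e1 by (simp add: norm_mult)
      moreover have "Re (e * (of_real (1 - t^2) * w - 2 * cnj a)) = (1 - t^2) * Re (w * e) - 2 * t"
      proof -
        have "e * cnj a = of_real t" using ee by (simp add: a_def mult_ac)
        hence "e * (of_real (1 - t^2) * w - 2 * cnj a) = of_real (1 - t^2) * (w * e) - 2 * of_real t"
          by (simp add: algebra_simps)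
        thus ?thesis by simp
      qed
      ultimately have ineq: "(1 - t^2) * Re (w * e) \<ge> 2 * t - 2 * \<beta>" by linarith
      have p1: "1 - t > 0" "1 + t > 0" using t0 t1 by auto
      have "(\<beta> - 1) * (- 1 / (1 - t)) - (\<beta> + 1) * (1 / (1 + t)) = (2 * t - 2 * \<beta>) / (1 - t^2)"
        using p1 by (simp add: field_simps power2_eq_square)
      also have "\<dots> \<le> Re (w * e)"
      proof -
        have "1 - t^2 > 0" using t0 t1 by (simp add: power_less_one_iff abs_square_less_1)
        thus ?thesis using ineq by (simp add: pos_divide_le_eq mult.commute)
      qed
      finally show ?thesis unfolding qd_def w_def a_def by simp
    qed
    have cont: "continuous_on {0..\<rho>} q"
    proof (rule continuous_at_imp_continuous_on, rule ballI)
      fix t assume "t \<in> {0..\<rho>}"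
      hence "\<bar>t\<bar> < 1" using \<rho>1 by auto
      thus "isCont q t" using dq DERIV_isCont by blast
    qed
    obtain l \<xi> where \<xi>: "0 < \<xi>" "\<xi> < \<rho>" and dl: "(q has_real_derivative l) (at \<xi>)"
      and eq: "q \<rho> - q 0 = (\<rho> - 0) * l"
      using MVT[OF \<rho>0 cont] dq \<rho>1 by (smt (verit) real_differentiable_def)
    have "l = qd \<xi>" using DERIV_unique[OF dl dq] \<xi> \<rho>1 by auto
    hence "l \<ge> 0" using qd_nonneg \<xi> \<rho>1 by auto
    hence "q \<rho> \<ge> q 0" using eq \<rho>0 by (smt (verit) mult_nonneg_nonneg)
    moreover have "q 0 = 0" using g0 by (simp add: q_def lamf_def)
    ultimately have "lamf \<beta> \<rho> \<le> Re (g z)" by (simp add: q_def ze)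
    hence "exp (lamf \<beta> \<rho>) \<le> exp (Re (g z))" by simp
    thus ?thesis using nm[OF z] by (simp add: \<beta>_def \<rho>_def)
  qed
qed




definition Lam :: "real \<Rightarrow> real \<Rightarrow> real" where
  "Lam b t = (1 - exp (b * (ln (1 - t) - ln (1 + t)))) / (2 * b)"

lemma Lam_deriv:
  assumes b: "b > 0" and t: "\<bar>t\<bar> < 1"
  shows "(Lam b has_real_derivative exp (lamf b t)) (at t)"
proof -
  have p: "1 - t > 0" "1 + t > 0" using t by auto
  define E where "E = b * (ln (1 - t) - ln (1 + t))"
  have d1: "((\<lambda>t. ln (1 - t)) has_real_derivative (- 1 / (1 - t))) (at t)"
    using p by (auto intro!: derivative_eq_intros)
  have d2: "((\<lambda>t. ln (1 + t)) has_real_derivative (1 / (1 + t))) (at t)"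
    using p by (auto intro!: derivative_eq_intros)
  have dE: "((\<lambda>t. b * (ln (1 - t) - ln (1 + t))) has_real_derivative b * (- 1 / (1 - t) - 1 / (1 + t))) (at t)"
    by (intro DERIV_cmult DERIV_diff d1 d2)
  have "(Lam b has_real_derivative (0 - exp E * (b * (- 1 / (1 - t) - 1 / (1 + t)))) / (2 * b)) (at t)"
    unfolding Lam_def[abs_def] E_def
    by (intro DERIV_cdivide DERIV_diff DERIV_const DERIV_chain2[OF DERIV_exp dE])
  moreover have "(0 - exp E * (b * (- 1 / (1 - t) - 1 / (1 + t)))) / (2 * b) = exp (lamf b t)"
  proof -
    have "lamf b t = E - ln (1 - t) - ln (1 + t)" by (simp add: lamf_def E_def algebra_simps)
    hence "exp (lamf b t) = exp E / ((1 - t) * (1 + t))"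
      using p by (simp add: exp_diff)
    moreover have m: "- 1 / (1 - t) - 1 / (1 + t) = - 2 / ((1 - t) * (1 + t))"
      using p by (simp add: field_simps)
    moreover have gen: "\<And>X P. P \<noteq> 0 \<Longrightarrow> (0 - X * (b * (- 2 / P))) / (2 * b) = X / P"
      using b by (simp add: field_simps)
    moreover have "(1 - t) * (1 + t) \<noteq> 0" using p by simp
    ultimately show ?thesis unfolding m by (simp only: gen)
  qed
  ultimately show ?thesis by simp
qed

lemma Lam_0: "Lam b 0 = 0" by (simp add: Lam_def)

lemma Lam_lower:
  assumes b: "b \<ge> 1" and r: "0 \<le> r" "r < 1"
  shows "r / (2 * b) \<le> Lam b r"
proof -
  have d: "ln (1 - r) - ln (1 + r) \<le> 0" using r by simp
  have "(b - 1) * (ln (1 - r) - ln (1 + r)) \<le> 0"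
    using d b by (intro mult_nonneg_nonpos) auto
  hence "b * (ln (1 - r) - ln (1 + r)) \<le> ln (1 - r) - ln (1 + r)"
    by (simp add: algebra_simps)
  also have "\<dots> \<le> ln (1 - r)" using r by simp
  finally have "exp (b * (ln (1 - r) - ln (1 + r))) \<le> 1 - r"
    using r by (metis exp_le_cancel_iff exp_ln diff_gt_0_iff_gt)
  thus ?thesis using b unfolding Lam_def by (simp add: divide_right_mono)
qed

lemma Lam_mono:
  assumes b: "b > 0" and xy: "0 \<le> x" "x \<le> y" "y < 1"
  shows "Lam b x \<le> Lam b y"
proof -
  have "ln (1 - y) \<le> ln (1 - x)" using xy by simp
  moreover have "ln (1 + x) \<le> ln (1 + y)" using xy by simp
  ultimately have "b * (ln (1 - y) - ln (1 + y)) \<le> b * (ln (1 - x) - ln (1 + x))"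
    using b by (intro mult_left_mono) auto
  hence "exp (b * (ln (1 - y) - ln (1 + y))) \<le> exp (b * (ln (1 - x) - ln (1 + x)))" by simp
  thus ?thesis using b unfolding Lam_def by (simp add: divide_right_mono)
qed




lemma norm_comp_deriv:
  fixes h :: "real \<Rightarrow> complex"
  assumes dh: "(h has_vector_derivative v) (at t)" and nz: "h t \<noteq> 0"
  shows "((\<lambda>x. cmod (h x)) has_real_derivative inner v (sgn (h t))) (at t)"
proof -
  have "((norm \<circ> h) has_derivative ((\<lambda>y. inner y (sgn (h t))) \<circ> (\<lambda>s. s *\<^sub>R v))) (at t)"
    using diff_chain_at[OF dh[unfolded has_vector_derivative_def] has_derivative_norm[OF nz]] .
  moreover have "((\<lambda>y. inner y (sgn (h t))) \<circ> (\<lambda>s. s *\<^sub>R v)) = (*) (inner v (sgn (h t)))"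
    by (auto simp: fun_eq_iff)
  ultimately show ?thesis by (simp add: has_field_derivative_def o_def)
qed

lemma curve_bound:
  assumes L: "linear_invariant_family F" and B: "bdd_above ((\<lambda>f. cmod (coeff2 f)) ` F)"
    and gF: "g \<in> F" and inj: "inj_on g unit_disk" and z0: "\<zeta>0 \<in> unit_disk"
  shows "Lam (lif_order F) (cmod \<zeta>0) \<le> cmod (g \<zeta>0)"
proof -
  define \<beta> where "\<beta> = lif_order F"
  have b1: "\<beta> \<ge> 1" unfolding \<beta>_def by (rule lif_order_ge1[OF L B gF])
  have nf: "normalized_lu g" using L gF by (simp add: linear_invariant_family_def)
  have hg: "g holomorphic_on unit_disk" and g0: "g 0 = 0" using nf by (auto simp: normalized_lu_def)
  define r where "r = cmod \<zeta>0"
  have r1: "r < 1" using z0 by (simp add: r_def)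
  show ?thesis
  proof (cases "r = 0")
    case True thus ?thesis by (simp add: r_def[symmetric] Lam_0)
  next
    case False
    hence r0: "r > 0" by (simp add: r_def)
    define S where "S = ball (0::complex) r"
    have SD: "S \<subseteq> unit_disk" using r1 by (auto simp: S_def)
    have hgS: "g holomorphic_on S" using hg SD holomorphic_on_subset by blast
    have injS: "inj_on g S" using inj SD inj_on_subset by blast
    have oS: "open S" by (simp add: S_def)
    define W where "W = g ` S"
    have oW: "open W" unfolding W_def by (rule open_mapping_thm3[OF hgS oS injS])
    obtain G where hG: "G holomorphic_on W"
      and dG: "\<And>z. z \<in> S \<Longrightarrow> deriv g z * deriv G (g z) = 1"
      and Gg: "\<And>z. z \<in> S \<Longrightarrow> G (g z) = z"
      using holomorphic_has_inverse[OF hgS oS injS] unfolding W_def by metis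
    define w1 where "w1 = g \<zeta>0"
    have w1W: "w1 \<notin> W"
    proof
      assume "w1 \<in> W"
      then obtain x where x: "x \<in> S" "g x = g \<zeta>0" by (auto simp: W_def w1_def)
      hence "x = \<zeta>0" using inj SD z0 by (meson inj_onD subsetD)
      thus False using x by (simp add: S_def r_def)
    qed
    have 0: "0 \<in> W" using r0 g0 by (force simp: W_def S_def)
    define A where "A = {t \<in> {0..1::real}. of_real t * w1 \<notin> W}"
    have A1: "1 \<in> A" using w1W by (simp add: A_def)
    have cA: "closed A"
    proof -
      have "closed ((\<lambda>t::real. of_real t * w1) -` (- W))"
        by (rule continuous_closed_vimage) (use oW in \<open>auto intro!: continuous_intros\<close>)
      moreover have "A = {0..1} \<inter> (\<lambda>t::real. of_real t * w1) -` (- W)" by (auto simp: A_def)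
      ultimately show ?thesis by auto
    qed
    define s where "s = Inf A"
    have sA: "s \<in> A" unfolding s_def
      by (rule closed_contains_Inf[OF _ _ cA]) (use A1 in \<open>auto simp: A_def intro: bdd_belowI[of _ 0]\<close>)
    have s01: "0 \<le> s" "s \<le> 1" using sA by (auto simp: A_def)
    have below: "of_real t * w1 \<in> W" if "0 \<le> t" "t < s" for t
    proof (rule ccontr)
      assume "of_real t * w1 \<notin> W"
      hence "t \<in> A" using that s01 by (auto simp: A_def)
      hence "s \<le> t" unfolding s_def by (rule cInf_lower) (auto simp: A_def intro: bdd_belowI[of _ 0])
      thus False using that by simp
    qed
    define w0 where "w0 = of_real s * w1"
    have w0W: "w0 \<notin> W" using sA by (simp add: A_def w0_def)
    have w0nz: "w0 \<noteq> 0" using w0W 0 by auto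
    have w0le: "cmod w0 \<le> cmod w1" using s01 by (simp add: w0_def norm_mult mult_left_le_one_le)
    have seg: "of_real t * w0 \<in> W" if "0 \<le> t" "t < 1" for t
    proof -
      have "s > 0" using w0nz s01 by (cases "s = 0") (auto simp: w0_def)
      hence "t * s < s" "0 \<le> t * s" using that by auto
      thus ?thesis using below[of "t * s"] by (simp add: w0_def mult.assoc)
    qed
    have GW: "G w \<in> S" "g (G w) = w" if "w \<in> W" for w
      using that Gg by (auto simp: W_def)
    define h where "h = (\<lambda>t::real. G (of_real t * w0))"
    have hS: "h t \<in> S" and gh: "g (h t) = of_real t * w0" if "0 \<le> t" "t < 1" for t
      using GW seg that by (auto simp: h_def)
    have h0: "h 0 = 0" using Gg[of 0] r0 g0 by (simp add: h_def S_def)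
    have hnz: "h t \<noteq> 0" if "0 < t" "t < 1" for t
    proof
      assume "h t = 0"
      hence "of_real t * w0 = 0" using gh[of t] that g0 by simp
      thus False using that w0nz by simp
    qed
    define v where "v = (\<lambda>t::real. deriv G (of_real t * w0) * w0)"
    have dh: "(h has_vector_derivative v t) (at t)" if "0 \<le> t" "t < 1" for t
    proof -
      have lin: "((\<lambda>w. w * w0) has_field_derivative w0) (at (of_real t))"
        by (auto intro!: derivative_eq_intros)
      have "((\<lambda>w. G (w * w0)) has_field_derivative deriv G (of_real t * w0) * w0) (at (of_real t))"
        using DERIV_chain2[OF holomorphic_derivI[OF hG oW seg[OF that]] lin] by simp
      from has_vector_derivative_real_field[OF this] show ?thesis by (simp add: h_def v_def)
    qed
    have hD: "h t \<in> unit_disk" if "0 \<le> t" "t < 1" for t using hS[OF that] SD by auto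
    have hlt: "cmod (h t) < r" if "0 \<le> t" "t < 1" for t using hS[OF that] by (simp add: S_def)
    define p where "p = (\<lambda>t. Lam \<beta> (cmod (h t)) - t * cmod w0)"
    define pd where "pd = (\<lambda>t. exp (lamf \<beta> (cmod (h t))) * inner (v t) (sgn (h t)) - cmod w0)"
    have dp: "(p has_real_derivative pd t) (at t)" if "0 < t" "t < 1" for t
    proof -
      have t: "0 \<le> t" "t < 1" using that by auto
      have a1: "\<bar>cmod (h t)\<bar> < 1" using hlt[OF t] r1 by simp
      have "((\<lambda>t. Lam \<beta> (cmod (h t))) has_real_derivative exp (lamf \<beta> (cmod (h t))) * inner (v t) (sgn (h t))) (at t)"
        using DERIV_chain2[OF Lam_deriv[OF _ a1] norm_comp_deriv[OF dh[OF t] hnz[OF that]]] b1 by simp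
      hence "(p has_real_derivative exp (lamf \<beta> (cmod (h t))) * inner (v t) (sgn (h t)) - 1 * cmod w0) (at t)"
        unfolding p_def by (intro DERIV_diff DERIV_cmult_right DERIV_ident)
      thus ?thesis by (simp add: pd_def)
    qed
    have pd_le: "pd t \<le> 0" if "0 < t" "t < 1" for t
    proof -
      have t: "0 \<le> t" "t < 1" using that by auto
      have e1: "deriv g (h t) * deriv G (of_real t * w0) = 1" using dG[OF hS[OF t]] gh[OF t] by simp
      have low: "exp (lamf \<beta> (cmod (h t))) \<le> cmod (deriv g (h t))"
        unfolding \<beta>_def by (rule deriv_lower[OF L B gF hD[OF t]])
      have "inner (v t) (sgn (h t)) \<le> cmod (v t) * cmod (sgn (h t))" by (rule norm_cauchy_schwarz)
      also have "\<dots> = cmod (v t)" using hnz[OF that] by (simp add: norm_sgn)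
      finally have i1: "inner (v t) (sgn (h t)) \<le> cmod (v t)" .
      have "exp (lamf \<beta> (cmod (h t))) * inner (v t) (sgn (h t)) \<le> exp (lamf \<beta> (cmod (h t))) * cmod (v t)"
        using i1 by (simp add: mult_left_mono)
      also have "\<dots> \<le> cmod (deriv g (h t)) * cmod (v t)"
        using low by (simp add: mult_right_mono)
      also have "\<dots> = cmod w0"
      proof -
        have "cmod (deriv g (h t)) * cmod (v t) = cmod (deriv g (h t) * deriv G (of_real t * w0)) * cmod w0"
          by (simp add: v_def norm_mult)
        thus ?thesis using e1 by simp
      qed
      finally show ?thesis by (simp add: pd_def)
    qed
    have pcont: "isCont p t" if "0 \<le> t" "t < 1" for t
    proof -
      have a1: "\<bar>cmod (h t)\<bar> < 1" using hlt[OF that] r1 by simp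
      have "isCont h t" using has_vector_derivative_continuous[OF dh[OF that]] .
      hence c1: "isCont (\<lambda>t. cmod (h t)) t" by (intro continuous_intros)
      have c2: "isCont (Lam \<beta>) (cmod (h t))" using DERIV_isCont[OF Lam_deriv[OF _ a1]] b1 by simp
      have "isCont (\<lambda>t. Lam \<beta> (cmod (h t))) t" using isCont_o2[OF c1 c2] .
      thus ?thesis unfolding p_def by (intro continuous_intros)
    qed
    have p0: "p 0 = 0" by (simp add: p_def h0 Lam_0)
    have ple: "p T \<le> 0" if "0 \<le> T" "T < 1" for T
    proof (cases "T = 0")
      case True thus ?thesis using p0 by simp
    next
      case False
      hence T0: "0 < T" using that by simp
      have cont: "continuous_on {0..T} p"
      proof (rule continuous_at_imp_continuous_on, rule ballI)
        fix t assume "t \<in> {0..T}"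
        hence "0 \<le> t" "t < 1" using that by auto
        thus "isCont p t" by (rule pcont)
      qed
      have dif: "p differentiable (at x)" if "0 < x" "x < T" for x
        using dp[of x] that \<open>T < 1\<close> real_differentiable_def by auto
      obtain l \<xi> where \<xi>: "0 < \<xi>" "\<xi> < T" and dl: "(p has_real_derivative l) (at \<xi>)"
        and eq: "p T - p 0 = (T - 0) * l"
        using MVT[OF T0 cont dif] by blast
      have "l = pd \<xi>" using DERIV_unique[OF dl dp] \<xi> that by auto
      hence "l \<le> 0" using pd_le \<xi> that by auto
      thus ?thesis using eq T0 p0 by (smt (verit) mult_nonneg_nonpos)
    qed
    have LamH: "Lam \<beta> (cmod (h T)) \<le> cmod w0" if "0 \<le> T" "T < 1" for T
    proof -
      have "T * cmod w0 \<le> cmod w0" using that by (simp add: mult_left_le_one_le)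
      thus ?thesis using ple[OF that] by (simp add: p_def)
    qed
    have reach: "\<exists>T. 0 \<le> T \<and> T < 1 \<and> \<rho> < cmod (h T)" if "0 \<le> \<rho>" "\<rho> < r" for \<rho>
    proof (rule ccontr)
      assume "\<not> ?thesis"
      hence le: "\<And>T. 0 \<le> T \<Longrightarrow> T < 1 \<Longrightarrow> cmod (h T) \<le> \<rho>" by force
      define K where "K = g ` cball 0 \<rho>"
      have cbD: "cball 0 \<rho> \<subseteq> unit_disk" using that r1 by auto
      have "compact K" unfolding K_def
        by (rule compact_continuous_image[OF _ compact_cball])
           (use holomorphic_on_imp_continuous_on[OF hg] cbD continuous_on_subset in blast)
      hence cK: "closed K" by (rule compact_imp_closed)
      have ev: "eventually (\<lambda>T. of_real T * w0 \<in> K) (at_left 1)"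
      proof -
        have "eventually (\<lambda>T. T \<in> {0<..<1}) (at_left (1::real))" by (rule eventually_at_left_real) simp
        thus ?thesis
        proof eventually_elim
          case (elim T)
          hence T: "0 \<le> T" "T < 1" by auto
          have "h T \<in> cball 0 \<rho>" using le[OF T] by simp
          thus ?case unfolding K_def using gh[OF T] by (metis image_eqI)
        qed
      qed
      have lim: "((\<lambda>T. of_real T * w0) \<longlongrightarrow> of_real 1 * w0) (at_left (1::real))"
        by (intro tendsto_intros)
      have "w0 \<in> K" using Lim_in_closed_set[OF cK ev _ lim] by simp
      then obtain x where x: "x \<in> cball 0 \<rho>" "w0 = g x" by (auto simp: K_def)
      hence "x \<in> S" using that by (simp add: S_def)
      hence "w0 \<in> W" using x by (simp add: W_def)
      thus False using w0W by simp
    qed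
    have bound_below: "Lam \<beta> \<rho> \<le> cmod w0" if \<rho>: "0 \<le> \<rho>" "\<rho> < r" for \<rho>
    proof -
      obtain T where T: "0 \<le> T" "T < 1" "\<rho> < cmod (h T)" using reach[OF \<rho>] by blast
      have "Lam \<beta> \<rho> \<le> Lam \<beta> (cmod (h T))"
        using Lam_mono[of \<beta> \<rho> "cmod (h T)"] b1 \<rho> T hlt[OF T(1,2)] r1 by simp
      thus ?thesis using LamH[OF T(1,2)] by simp
    qed
    have "Lam \<beta> r \<le> cmod w0"
    proof (rule tendsto_upperbound)
      have "\<bar>r\<bar> < 1" using r0 r1 by simp
      hence "isCont (Lam \<beta>) r" using DERIV_isCont[OF Lam_deriv] b1 by simp
      thus "(Lam \<beta> \<longlongrightarrow> Lam \<beta> r) (at_left r)"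
        by (simp add: isCont_def filterlim_at_split)
      have "eventually (\<lambda>x. x \<in> {0<..<r}) (at_left r)" by (rule eventually_at_left_real) (use r0 in simp)
      thus "eventually (\<lambda>x. Lam \<beta> x \<le> cmod w0) (at_left r)"
        by eventually_elim (use bound_below in auto)
    qed simp
    thus ?thesis using w0le by (simp add: \<beta>_def r_def w1_def)
  qed
qed




theorem mainTheorem2:
  fixes F :: "(complex \<Rightarrow> complex) set" and \<phi> :: "complex \<Rightarrow> complex" and z :: complex
  assumes "linear_invariant_family F"
    and "bdd_above ((\<lambda>f. cmod (coeff2 f)) ` F)"
    and "\<phi> \<in> F" and "inj_on \<phi> unit_disk"
    and "z \<in> unit_disk"
  shows "(1 - (cmod z)\<^sup>2) * cmod (z * deriv \<phi> z / \<phi> z) \<le> 2 * lif_order F"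
proof -
  note L = assms(1) and B = assms(2) and pF = assms(3) and inj = assms(4) and zD = assms(5)
  define \<beta> where "\<beta> = lif_order F"
  have b1: "\<beta> \<ge> 1" unfolding \<beta>_def by (rule lif_order_ge1[OF L B pF])
  have nf: "normalized_lu \<phi>" using L pF by (simp add: linear_invariant_family_def)
  have p0: "\<phi> 0 = 0" and dnz: "deriv \<phi> z \<noteq> 0" using nf zD by (auto simp: normalized_lu_def)
  show ?thesis
  proof (cases "z = 0")
    case True thus ?thesis using b1 by (simp add: \<beta>_def)
  next
    case False
    have zm: "cmod z < 1" using zD by simp
    have r: "1 - (cmod z)^2 > 0" using zm by (simp add: abs_square_less_1)
    define c where "c = complex_of_real (1 - (cmod z)\<^sup>2) * deriv \<phi> z"
    have r': "1 - (cmod z)^2 \<noteq> 0" using r by linarith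
    have rc: "complex_of_real (1 - (cmod z)^2) \<noteq> 0" using r' of_real_eq_0_iff by blast
    have cnz: "c \<noteq> 0" unfolding c_def using dnz rc by (simp only: mult_eq_0_iff) simp
    have cm: "cmod c = (1 - (cmod z)^2) * cmod (deriv \<phi> z)"
      unfolding c_def norm_mult norm_of_real using r by simp
    define g where "g = koebe_transform \<phi> z"
    have gF: "g \<in> F" using L pF zD by (simp add: linear_invariant_family_def g_def)
    have gdef: "g x = (\<phi> (disk_aut z x) - \<phi> z) / c" for x
      by (simp add: g_def koebe_transform_def c_def)
    have ginj: "inj_on g unit_disk"
    proof (rule inj_onI)
      fix x y assume x: "x \<in> unit_disk" and y: "y \<in> unit_disk" and e: "g x = g y"
      hence "\<phi> (disk_aut z x) = \<phi> (disk_aut z y)" using cnz by (simp add: gdef)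
      hence "disk_aut z x = disk_aut z y"
        using inj disk_aut_in[OF zD x] disk_aut_in[OF zD y] by (meson inj_onD)
      thus "x = y" using disk_aut_inj[OF zD] x y by (meson inj_onD)
    qed
    have mz: "- z \<in> unit_disk" using zD by simp
    have T: "disk_aut z (- z) = 0" by (simp add: disk_aut_def)
    have gz: "cmod (g (- z)) = cmod (\<phi> z) / cmod c"
      by (simp add: gdef T p0 norm_divide)
    have "Lam \<beta> (cmod (- z)) \<le> cmod (g (- z))"
      unfolding \<beta>_def by (rule curve_bound[OF L B gF ginj mz])
    moreover have "cmod z / (2 * \<beta>) \<le> Lam \<beta> (cmod z)"
      by (rule Lam_lower[OF b1]) (use zm in auto)
    ultimately have ineq: "cmod z / (2 * \<beta>) \<le> cmod (\<phi> z) / cmod c" using gz by simp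
    have pnz: "\<phi> z \<noteq> 0"
    proof
      assume "\<phi> z = 0"
      hence "\<phi> z = \<phi> 0" using p0 by simp
      hence "z = 0" using inj zD by (meson inj_onD centre_in_ball zero_less_one)
      thus False using False by simp
    qed
    have cpos: "cmod c > 0" using cnz by simp
    have ppos: "cmod (\<phi> z) > 0" using pnz by simp
    have bpos: "2 * \<beta> > 0" using b1 by simp
    from ineq have "cmod z * cmod c \<le> 2 * \<beta> * cmod (\<phi> z)"
      using cpos bpos by (simp add: divide_le_eq le_divide_eq field_simps)
    hence "cmod z * cmod c / cmod (\<phi> z) \<le> 2 * \<beta>"
      using ppos by (simp add: divide_le_eq mult.commute)
    moreover have "(1 - (cmod z)\<^sup>2) * cmod (z * deriv \<phi> z / \<phi> z) = cmod z * cmod c / cmod (\<phi> z)"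
      unfolding cm by (simp add: norm_mult norm_divide)
    ultimately show ?thesis by (simp add: \<beta>_def)
  qed
qed


end
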